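(* For every three-qubit state $\rho_{ABC}$ (pure or mixed), at most two of the three numbers $S_{AB}, S_{AC}, S_{BC}$ exceed $1$; that is, at most two of the three two-qubit reduced states violate the three-settings CJWR linear steering inequality. Moreover, steering can be non-monogamous in this scenario: there exists a three-qubit state for which two of the reduced states violate the three-settings CJWR linear steering inequality (two of $S_{AB}, S_{AC}, S_{BC}$ exceed $1$).
   Context: For a two-qubit state $\rho$ let $T=[t_{kl}]$ with $t_{kl}=\mathrm{Tr}[\rho\,\sigma_k\otimes\sigma_l]$ ($k,l\in\{1,2,3\}$, $\sigma_k$ the Pauli matrices) be its correlation matrix and $S(\rho)=\mathrm{Tr}[T^{T}T]=\sum_{k,l}t_{kl}^2$. For a three-qubit state $\rho_{ABC}$, $\rho_{AB},\rho_{AC},\rho_{BC}$ denote its two-qubit reduced states and $S_{ij}=S(\rho_{ij})$. The three-settings CJWR linear steering inequality for a two-qubit state $\rho$ reads $F_3(\rho,\mu)=\frac{1}{\sqrt3}\left|\sum_{k=1}^{3}\langle A_k\otimes B_k\rangle\right|\le 1$, where $A_k=\hat a_k\cdot\vec\sigma$ with unit vectors $\hat a_k\in\mathbb R^3$, $B_k=\hat b_k\cdot\vec\sigma$ with orthonormal vectors $\hat b_k\in\mathbb R^3$, $\mu$ the set of these directions, and $\langle X\rangle=\mathrm{Tr}[\rho X]$. Its maximum over all measurement settings $\mu$ equals $\sqrt{S(\rho)}$, so $\rho$ violates the inequality (is "$F_3$ steerable") if and only if $S(\rho)>1$. *)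

theory Defs
  imports Complex_Main
begin

text \<open>Qubit basis indexed by bool (False = |0>, True = |1>).
  Operators on a finite Hilbert space with basis type 'a are matrices 'a => 'a => complex.\<close>

type_synonym 'a op = "'a \<Rightarrow> 'a \<Rightarrow> complex"

definition hermitian :: "('a::finite) op \<Rightarrow> bool" where
  "hermitian M \<longleftrightarrow> (\<forall>i j. M j i = cnj (M i j))"

definition psd :: "('a::finite) op \<Rightarrow> bool" where
  "psd M \<longleftrightarrow> hermitian M \<and>
     (\<forall>v :: 'a \<Rightarrow> complex. 0 \<le> Re (\<Sum>i\<in>UNIV. \<Sum>j\<in>UNIV. cnj (v i) * M i j * v j))"

definition trace :: "('a::finite) op \<Rightarrow> complex" where
  "trace M = (\<Sum>i\<in>UNIV. M i i)"

definition density :: "('a::finite) op \<Rightarrow> bool" where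
  "density M \<longleftrightarrow> psd M \<and> trace M = 1"

definition pauli :: "nat \<Rightarrow> bool op" where
  "pauli k = (\<lambda>i j.
     if k = 1 then (if i \<noteq> j then 1 else 0)
     else if k = 2 then (if \<not> i \<and> j then - \<i> else if i \<and> \<not> j then \<i> else 0)
     else if k = 3 then (if i = j then (if i then -1 else 1) else 0)
     else 0)"

definition tensor :: "('a::finite) op \<Rightarrow> ('b::finite) op \<Rightarrow> ('a \<times> 'b) op" where
  "tensor A B = (\<lambda>(i1, i2) (j1, j2). A i1 j1 * B i2 j2)"

definition mprod :: "('a::finite) op \<Rightarrow> 'a op \<Rightarrow> 'a op" where
  "mprod A B = (\<lambda>i k. \<Sum>j\<in>UNIV. A i j * B j k)"

text \<open>Correlation matrix entries t_kl = Tr[rho (sigma_k (x) sigma_l)] (real for Hermitian rho).\<close>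
definition corr :: "(bool \<times> bool) op \<Rightarrow> nat \<Rightarrow> nat \<Rightarrow> real" where
  "corr \<rho> k l = Re (trace (mprod \<rho> (tensor (pauli k) (pauli l))))"

text \<open>S(rho) = Tr[T^T T] = sum of squares of the t_kl.\<close>
definition S :: "(bool \<times> bool) op \<Rightarrow> real" where
  "S \<rho> = (\<Sum>k\<in>{1,2,3}. \<Sum>l\<in>{1,2,3}. (corr \<rho> k l)\<^sup>2)"

definition red_AB :: "(bool \<times> bool \<times> bool) op \<Rightarrow> (bool \<times> bool) op" where
  "red_AB \<rho> = (\<lambda>(a, b) (a', b'). \<Sum>c\<in>UNIV. \<rho> (a, b, c) (a', b', c))"

definition red_AC :: "(bool \<times> bool \<times> bool) op \<Rightarrow> (bool \<times> bool) op" where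
  "red_AC \<rho> = (\<lambda>(a, c) (a', c'). \<Sum>b\<in>UNIV. \<rho> (a, b, c) (a', b, c'))"

definition red_BC :: "(bool \<times> bool \<times> bool) op \<Rightarrow> (bool \<times> bool) op" where
  "red_BC \<rho> = (\<lambda>(b, c) (b', c'). \<Sum>a\<in>UNIV. \<rho> (a, b, c) (a, b', c'))"

end

theory Submission
  imports Defs "HOL-Analysis.L2_Norm"
begin

definition outer :: "('a::finite \<Rightarrow> complex) \<Rightarrow> 'a op" where
  "outer u = (\<lambda>i j. u i * cnj (u j))"

definition Q :: "('a::finite) op \<Rightarrow> ('a \<Rightarrow> complex) \<Rightarrow> complex" where
  "Q M v = (\<Sum>i\<in>UNIV. \<Sum>j\<in>UNIV. cnj (v i) * M i j * v j)"

lemma psd_Q: "psd M \<longleftrightarrow> hermitian M \<and> (\<forall>v. 0 \<le> Re (Q M v))"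
  unfolding psd_def Q_def by simp

lemma sum_if_outer: "(\<Sum>i\<in>(UNIV::'a::finite set). \<Sum>j\<in>(UNIV::'b::finite set). if i = a then f j else (0::complex)) = (\<Sum>j\<in>UNIV. f j)"
proof -
  have "(\<Sum>i\<in>(UNIV::'a set). \<Sum>j\<in>(UNIV::'b set). if i = a then f j else (0::complex)) = (\<Sum>i\<in>(UNIV::'a set). if i = a then (\<Sum>j\<in>UNIV. f j) else 0)"
    by (intro sum.cong refl) simp
  also have "\<dots> = (\<Sum>j\<in>UNIV. f j)" by simp
  finally show ?thesis .
qed

lemma sum_if_inner: "(\<Sum>i\<in>(UNIV::'a::finite set). \<Sum>j\<in>(UNIV::'b::finite set). if j = a then f i else (0::complex)) = (\<Sum>i\<in>UNIV. f i)"
  by simp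

lemma sum_if_both: "(\<Sum>i\<in>(UNIV::'a::finite set). \<Sum>j\<in>(UNIV::'a set). if i = a \<and> j = a then c else (0::complex)) = c"
proof -
  have "(\<Sum>i\<in>(UNIV::'a set). \<Sum>j\<in>(UNIV::'a set). if i = a \<and> j = a then c else (0::complex)) = (\<Sum>i\<in>(UNIV::'a set). if i = a then c else 0)"
    by (intro sum.cong refl) auto
  also have "\<dots> = c" by simp
  finally show ?thesis .
qed

lemma Q_shift:
  fixes M :: "('a::finite) op"
  shows "Q M (\<lambda>i. v i + (if i = a then s else 0)) = Q M v + cnj s * (\<Sum>j\<in>UNIV. M a j * v j)
     + s * (\<Sum>i\<in>UNIV. cnj (v i) * M i a) + cnj s * s * M a a"
proof -
  have "Q M (\<lambda>i. v i + (if i = a then s else 0)) =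
    (\<Sum>i\<in>UNIV. \<Sum>j\<in>UNIV. cnj (v i) * M i j * v j + (if i = a then cnj s * M a j * v j else 0)
       + (if j = a then cnj (v i) * M i a * s else 0) + (if i = a \<and> j = a then cnj s * s * M a a else 0))"
    unfolding Q_def apply (intro sum.cong refl) subgoal for i j by (cases "i = a"; cases "j = a"; simp add: algebra_simps) done
  also have "\<dots> = Q M v + (\<Sum>i\<in>UNIV. \<Sum>j\<in>UNIV. if i = a then cnj s * M a j * v j else 0)
     + (\<Sum>i\<in>UNIV. \<Sum>j\<in>UNIV. if j = a then cnj (v i) * M i a * s else 0)
     + (\<Sum>i\<in>UNIV. \<Sum>j\<in>UNIV. if i = a \<and> j = a then cnj s * s * M a a else 0)"
    unfolding Q_def by (simp only: sum.distrib)
  also have "\<dots> = Q M v + cnj s * (\<Sum>j\<in>UNIV. M a j * v j)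
     + s * (\<Sum>i\<in>UNIV. cnj (v i) * M i a) + cnj s * s * M a a"
    unfolding sum_if_outer sum_if_inner sum_if_both
    by (simp add: sum_distrib_left algebra_simps)
  finally show ?thesis .
qed

lemma Q_delta: "Q M (\<lambda>i. if i = a then 1 else 0) = M a a"
proof -
  have "Q M (\<lambda>i. if i = a then 1 else 0) = (\<Sum>i\<in>UNIV. \<Sum>j\<in>UNIV. if i = a \<and> j = a then M a a else 0)"
    unfolding Q_def by (intro sum.cong refl) auto
  then show ?thesis using sum_if_both by simp
qed

lemma psd_diag:
  assumes "psd M" shows "M a a = complex_of_real (Re (M a a))" "0 \<le> Re (M a a)"
proof -
  have h: "hermitian M" using assms psd_Q by blast
  have "M a a = cnj (M a a)" using h unfolding hermitian_def by blast
  then show "M a a = complex_of_real (Re (M a a))" by (metis Reals_cnj_iff complex_is_Real_iff of_real_Re)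
  show "0 \<le> Re (M a a)" using assms Q_delta[of M a] unfolding psd_Q by metis
qed

lemma herm_sum:
  assumes "hermitian M"
  shows "(\<Sum>i\<in>UNIV. cnj (v i) * M i a) = cnj (\<Sum>j\<in>UNIV. M a j * v j)"
proof -
  have e: "\<And>i. M i a = cnj (M a i)" using assms unfolding hermitian_def by blast
  have "(\<Sum>i\<in>UNIV. cnj (v i) * M i a) = (\<Sum>i\<in>UNIV. cnj (M a i * v i))"
    by (intro sum.cong refl) (simp add: e mult.commute)
  then show ?thesis by simp
qed

lemma psd_zero_row:
  assumes p: "psd M" and z: "M a a = 0"
  shows "M a j = 0"
proof (rule ccontr)
  assume nz: "M a j \<noteq> 0"
  define m where "m = M a j"
  have h: "hermitian M" using p psd_Q by blast
  have ja: "j \<noteq> a" using nz z by auto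
  define e where "e = (\<lambda>i. if i = j then (1::complex) else 0)"
  have s1: "(\<Sum>k\<in>UNIV. M a k * e k) = m"
    unfolding e_def m_def by (simp add: if_distrib cong: if_cong)
  have s2: "(\<Sum>i\<in>UNIV. cnj (e i) * M i a) = cnj m"
    using herm_sum[OF h, of e a] s1 by simp
  have qe: "Q M e = M j j" unfolding e_def by (rule Q_delta)
  define t where "t = (Re (M j j) + 1) / (2 * (cmod m)^2)"
  have cm: "0 < cmod m" using nz m_def by simp
  define s where "s = - complex_of_real t * m"
  have "Q M (\<lambda>i. e i + (if i = a then s else 0)) = M j j + cnj s * m + s * cnj m + cnj s * s * M a a"
    using Q_shift[of M e a s] s1 s2 qe by simp
  also have "\<dots> = M j j - 2 * complex_of_real t * (m * cnj m)"
    using z unfolding s_def by (simp add: algebra_simps)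
  finally have "Re (Q M (\<lambda>i. e i + (if i = a then s else 0))) = Re (M j j) - 2 * t * (cmod m)^2"
    by (simp add: complex_mult_cnj cmod_power2)
  also have "\<dots> = -1" unfolding t_def using cm by (simp add: field_simps)
  finally show False using p unfolding psd_Q by (metis neg_0_le_iff_le not_one_le_zero)
qed

lemma Q_diff: "Q (\<lambda>i j. M i j - N i j) v = Q M v - Q N v"
  unfolding Q_def by (simp add: algebra_simps sum_subtractf)

lemma Q_outer: "Q (outer u) v = (\<Sum>i\<in>UNIV. cnj (v i) * u i) * cnj (\<Sum>i\<in>UNIV. cnj (v i) * u i)"
  unfolding Q_def outer_def by (simp add: sum_product algebra_simps)

lemma alg_id:
  fixes D :: complex assumes "D \<noteq> 0"
  shows "X - A * B / D = X + (- A / D) * B + (- B / D) * A + (- A / D) * (- B / D) * D"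
  using assms by (simp add: field_simps)

lemma schur:
  assumes p: "psd M" and dpos: "0 < Re (M a a)"
  defines "u \<equiv> \<lambda>i. M i a / complex_of_real (sqrt (Re (M a a)))"
  shows "psd (\<lambda>i j. M i j - outer u i j)"
proof -
  define d where "d = Re (M a a)"
  have u_def: "u = (\<lambda>i. M i a / complex_of_real (sqrt d))" using u_def d_def by simp
  have h: "hermitian M" using p psd_Q by blast
  have d0: "0 < d" using dpos d_def by simp
  have Maa: "M a a = complex_of_real d" using psd_diag[OF p] d_def by simp
  have hM: "hermitian (\<lambda>i j. M i j - outer u i j)"
  proof -
    have e: "\<And>i j. M j i = cnj (M i j)" using h unfolding hermitian_def by blast
    show ?thesis unfolding hermitian_def outer_def
    proof (intro allI)
      fix i j
      show "M j i - u j * cnj (u i) = cnj (M i j - u i * cnj (u j))"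
        by (simp only: e[of i j] complex_cnj_diff complex_cnj_mult complex_cnj_cnj mult.commute)
    qed
  qed
  have "0 \<le> Re (Q (\<lambda>i j. M i j - outer u i j) v)" for v
  proof -
    define m where "m = (\<Sum>j\<in>UNIV. M a j * v j)"
    define s where "s = - m / complex_of_real d"
    have s2: "(\<Sum>i\<in>UNIV. cnj (v i) * M i a) = cnj m" using herm_sum[OF h, of v a] m_def by simp
    have zq: "(\<Sum>i\<in>UNIV. cnj (v i) * u i) = cnj m / complex_of_real (sqrt d)"
      unfolding u_def using s2 by (simp add: sum_divide_distrib[symmetric] times_divide_eq_right)
    have sq: "complex_of_real (sqrt d) * complex_of_real (sqrt d) = complex_of_real d"
      using d0 by (simp flip: of_real_mult)
    have cd: "complex_of_real d \<noteq> 0" using d0 by simp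
    have csd: "complex_of_real (sqrt d) \<noteq> 0" using d0 by simp
    have "Q (\<lambda>i j. M i j - outer u i j) v = Q M v - cnj m * m / complex_of_real d"
    proof -
      have "cnj (cnj m / complex_of_real (sqrt d)) = m / complex_of_real (sqrt d)" by simp
      then have "(\<Sum>i\<in>UNIV. cnj (v i) * u i) * cnj (\<Sum>i\<in>UNIV. cnj (v i) * u i) = cnj m * m / complex_of_real d"
        unfolding zq by (simp only: times_divide_times_eq sq)
      then show ?thesis unfolding Q_diff Q_outer by simp
    qed
    also have "\<dots> = Q M (\<lambda>i. v i + (if i = a then s else 0))"
    proof -
      have cs: "cnj s = - cnj m / complex_of_real d" unfolding s_def by simp
      have "Q M v - cnj m * m / complex_of_real d = Q M v + cnj s * m + s * cnj m + cnj s * s * complex_of_real d"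
        unfolding cs unfolding s_def by (rule alg_id[OF cd])
      then show ?thesis unfolding Q_shift m_def[symmetric] s2 Maa .
    qed
    finally show ?thesis using p unfolding psd_Q by metis
  qed
  then show ?thesis using hM unfolding psd_Q by blast
qed


lemma decomp_aux:
  fixes A :: "'a::finite set"
  assumes "finite A"
  shows "\<And>M. psd M \<Longrightarrow> (\<forall>i j. i \<notin> A \<or> j \<notin> A \<longrightarrow> M i j = 0) \<Longrightarrow>
           \<exists>us. M = (\<lambda>i j. \<Sum>u\<leftarrow>us. outer u i j)"
  using assms
proof (induction A rule: finite_induct)
  case (empty M)
  then have "M = (\<lambda>i j. 0)" by (auto simp: fun_eq_iff)
  then show ?case by (intro exI[of _ "[]"]) simp
next
  case (insert a A M)
  have h: "hermitian M" using insert.prems(1) psd_Q by blast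
  have e: "\<And>i j. M j i = cnj (M i j)" using h unfolding hermitian_def by blast
  show ?case
  proof (cases "Re (M a a) = 0")
    case True
    have Maa: "M a a = 0" using psd_diag(1)[OF insert.prems(1), of a] True by simp
    have row: "M a j = 0" for j using psd_zero_row[OF insert.prems(1) Maa] .
    have col: "M j a = 0" for j using e[of a j] row[of j] by simp
    have "\<forall>i j. i \<notin> A \<or> j \<notin> A \<longrightarrow> M i j = 0"
    proof (intro allI impI)
      fix i j assume "i \<notin> A \<or> j \<notin> A"
      then show "M i j = 0"
        using insert.prems(2) row[of j] col[of i] by (cases "i = a \<or> j = a") auto
    qed
    then show ?thesis using insert.IH[OF insert.prems(1)] by blast
  next
    case False
    then have dpos: "0 < Re (M a a)" using psd_diag(2)[OF insert.prems(1), of a] by simp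
    define d where "d = Re (M a a)"
    define u where "u = (\<lambda>i. M i a / complex_of_real (sqrt (Re (M a a))))"
    define M' where "M' = (\<lambda>i j. M i j - outer u i j)"
    have pM': "psd M'" unfolding M'_def u_def by (rule schur[OF insert.prems(1) dpos])
    have Maa: "M a a = complex_of_real d" using psd_diag[OF insert.prems(1)] d_def by simp
    have d0: "0 < d" using dpos d_def by simp
    have sq: "complex_of_real (sqrt d) * complex_of_real (sqrt d) = complex_of_real d"
      using d0 by (simp flip: of_real_mult)
    have cd: "complex_of_real d \<noteq> 0" using d0 by simp
    have u_eq: "u = (\<lambda>i. M i a / complex_of_real (sqrt d))" unfolding u_def d_def ..
    have uz: "u k = 0" if "k \<notin> insert a A" for k
      using insert.prems(2) that unfolding u_eq by auto
    have aj: "M' a j = 0" for j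
    proof -
      have "outer u a j = M a a * cnj (M j a) / (complex_of_real (sqrt d) * complex_of_real (sqrt d))"
        unfolding outer_def u_eq by simp
      also have "\<dots> = M a j" unfolding sq Maa using e[of a j] cd by simp
      finally show ?thesis unfolding M'_def by simp
    qed
    have ia: "M' i a = 0" for i
    proof -
      have "outer u i a = M i a * cnj (M a a) / (complex_of_real (sqrt d) * complex_of_real (sqrt d))"
        unfolding outer_def u_eq by simp
      also have "\<dots> = M i a" unfolding sq Maa using cd by simp
      finally show ?thesis unfolding M'_def by simp
    qed
    have supp: "\<forall>i j. i \<notin> A \<or> j \<notin> A \<longrightarrow> M' i j = 0"
    proof (intro allI impI)
      fix i j assume ij: "i \<notin> A \<or> j \<notin> A"
      show "M' i j = 0"
      proof (cases "i = a \<or> j = a")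
        case True then show ?thesis using aj ia by blast
      next
        case False
        then have "i \<notin> insert a A \<or> j \<notin> insert a A" using ij by blast
        then show ?thesis using insert.prems(2) uz unfolding M'_def outer_def by auto
      qed
    qed
    obtain us where us: "M' = (\<lambda>i j. \<Sum>u\<leftarrow>us. outer u i j)" using insert.IH[OF pM' supp] by blast
    have "M = (\<lambda>i j. \<Sum>v\<leftarrow>(u#us). outer v i j)"
    proof (intro ext)
      fix i j
      have "M i j = M' i j + outer u i j" unfolding M'_def by simp
      then show "M i j = (\<Sum>v\<leftarrow>(u#us). outer v i j)" using us by simp
    qed
    then show ?thesis by blast
  qed
qed

lemma decomp: "psd (M :: ('a::finite) op) \<Longrightarrow> \<exists>us. M = (\<lambda>i j. \<Sum>u\<leftarrow>us. outer u i j)"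
  using decomp_aux[of "UNIV :: 'a set" M] by simp


lemma UNIV_bool2: "(UNIV :: (bool\<times>bool) set) = {(False,False),(False,True),(True,False),(True,True)}"
  by auto
lemma UNIV_bool8: "(UNIV :: (bool\<times>bool\<times>bool) set) = {(False,False,False),(False,False,True),(False,True,False),(False,True,True),(True,False,False),(True,False,True),(True,True,False),(True,True,True)}"
  by auto

definition nrm :: "('a::finite \<Rightarrow> complex) \<Rightarrow> real" where
  "nrm u = (\<Sum>i\<in>UNIV. (cmod (u i))^2)"

lemma pure_sum: "S (red_AB (outer u)) + S (red_AC (outer u)) + S (red_BC (outer u)) = 3 * (nrm u)^2"
  unfolding nrm_def S_def corr_def red_AB_def red_AC_def red_BC_def outer_def trace_def mprod_def tensor_def pauli_def
  apply (simp only: UNIV_bool8)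
  apply (simp add: UNIV_bool2 UNIV_bool cmod_power2)
  apply algebra
  done

definition redp :: "nat \<Rightarrow> (bool\<times>bool\<times>bool) op \<Rightarrow> (bool\<times>bool) op" where
  "redp p = (if p = 0 then red_AB else if p = 1 then red_AC else red_BC)"

definition G :: "(bool\<times>bool\<times>bool) op \<Rightarrow> nat\<times>nat\<times>nat \<Rightarrow> real" where
  "G \<rho> = (\<lambda>(p,k,l). corr (redp p \<rho>) k l)"

definition Iset :: "(nat\<times>nat\<times>nat) set" where
  "Iset = {0,1,2} \<times> {1,2,3} \<times> {1,2,3}"

lemma total: "S (red_AB \<rho>) + S (red_AC \<rho>) + S (red_BC \<rho>) = (\<Sum>x\<in>Iset. (G \<rho> x)^2)"
  unfolding Iset_def G_def redp_def S_def
  by (simp add: sum.cartesian_product[symmetric])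

lemma corr_add: "corr (\<lambda>i j. X i j + Y i j) k l = corr X k l + corr Y k l"
  unfolding corr_def trace_def mprod_def by (simp add: distrib_right sum.distrib)

lemma corr_zero: "corr (\<lambda>i j. 0) k l = 0"
  unfolding corr_def trace_def mprod_def by simp

lemma red_add:
  "red_AB (\<lambda>i j. A i j + B i j) = (\<lambda>i j. red_AB A i j + red_AB B i j)"
  "red_AC (\<lambda>i j. A i j + B i j) = (\<lambda>i j. red_AC A i j + red_AC B i j)"
  "red_BC (\<lambda>i j. A i j + B i j) = (\<lambda>i j. red_BC A i j + red_BC B i j)"
  unfolding red_AB_def red_AC_def red_BC_def by (auto simp: fun_eq_iff sum.distrib)

lemma red_zero:
  "red_AB (\<lambda>i j. 0) = (\<lambda>i j. 0)" "red_AC (\<lambda>i j. 0) = (\<lambda>i j. 0)" "red_BC (\<lambda>i j. 0) = (\<lambda>i j. 0)"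
  unfolding red_AB_def red_AC_def red_BC_def by (auto simp: fun_eq_iff)

lemma G_add: "G (\<lambda>i j. A i j + B i j) x = G A x + G B x"
  unfolding G_def redp_def by (cases x) (simp add: red_add corr_add)

lemma G_zero: "G (\<lambda>i j. 0) x = 0"
  unfolding G_def redp_def by (cases x) (simp add: red_zero corr_zero)

lemma G_list: "G (\<lambda>i j. \<Sum>u\<leftarrow>us. outer u i j) x = (\<Sum>u\<leftarrow>us. G (outer u) x)"
proof (induction us)
  case Nil
  then show ?case using G_zero by simp
next
  case (Cons v us)
  have "G (\<lambda>i j. \<Sum>u\<leftarrow>(v#us). outer u i j) x = G (\<lambda>i j. outer v i j + (\<Sum>u\<leftarrow>us. outer u i j)) x"
    by simp
  also have "\<dots> = G (outer v) x + G (\<lambda>i j. \<Sum>u\<leftarrow>us. outer u i j) x" by (rule G_add)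
  finally show ?case using Cons by simp
qed

lemma trace_list: "trace (\<lambda>i j. \<Sum>u\<leftarrow>us. outer u i j) = (\<Sum>u\<leftarrow>us. complex_of_real (nrm u))"
proof (induction us)
  case Nil
  then show ?case unfolding trace_def by simp
next
  case (Cons v us)
  have tv: "trace (outer v) = complex_of_real (nrm v)"
  proof -
    have "trace (outer v) = (\<Sum>i\<in>UNIV. complex_of_real ((cmod (v i))^2))"
      unfolding trace_def outer_def by (simp only: complex_norm_square)
    then show ?thesis unfolding nrm_def by simp
  qed
  have "trace (\<lambda>i j. \<Sum>u\<leftarrow>(v#us). outer u i j) = trace (outer v) + trace (\<lambda>i j. \<Sum>u\<leftarrow>us. outer u i j)"
    unfolding trace_def by (simp add: sum.distrib)
  then show ?case using Cons tv by simp
qed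

lemma L2_list: "L2_set (\<lambda>x. \<Sum>u\<leftarrow>us. f u x) A \<le> (\<Sum>u\<leftarrow>us. L2_set (f u) A)"
proof (induction us)
  case Nil
  then show ?case by (simp add: L2_set_0')
next
  case (Cons v us)
  have "L2_set (\<lambda>x. \<Sum>u\<leftarrow>(v#us). f u x) A = L2_set (\<lambda>x. f v x + (\<Sum>u\<leftarrow>us. f u x)) A" by simp
  also have "\<dots> \<le> L2_set (f v) A + L2_set (\<lambda>x. \<Sum>u\<leftarrow>us. f u x) A" by (rule L2_set_triangle_ineq)
  finally show ?case using Cons by simp
qed

lemma L2_pure: "L2_set (G (outer u)) Iset = sqrt 3 * nrm u"
proof -
  have n0: "0 \<le> nrm u" unfolding nrm_def by (simp add: sum_nonneg)
  have "L2_set (G (outer u)) Iset = sqrt (3 * (nrm u)^2)"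
    unfolding L2_set_def using total[of "outer u"] pure_sum[of u] by simp
  also have "\<dots> = sqrt 3 * nrm u" using n0 by (simp add: real_sqrt_mult)
  finally show ?thesis .
qed

lemma main_bound:
  assumes "density \<rho>"
  shows "S (red_AB \<rho>) + S (red_AC \<rho>) + S (red_BC \<rho>) \<le> 3"
proof -
  obtain us where us: "\<rho> = (\<lambda>i j. \<Sum>u\<leftarrow>us. outer u i j)"
    using decomp assms unfolding density_def by blast
  have tr: "trace \<rho> = 1" using assms unfolding density_def by blast
  have n1: "(\<Sum>u\<leftarrow>us. nrm u) = 1"
  proof -
    have ofr: "(\<Sum>u\<leftarrow>vs. complex_of_real (nrm u)) = complex_of_real (\<Sum>u\<leftarrow>vs. nrm u)" for vs
      by (induction vs) simp_all
    have "complex_of_real (\<Sum>u\<leftarrow>us. nrm u) = 1" using tr trace_list[of us] us ofr[of us] by metis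
    then show ?thesis by simp
  qed
  have "L2_set (G \<rho>) Iset = L2_set (\<lambda>x. \<Sum>u\<leftarrow>us. G (outer u) x) Iset"
    unfolding us G_list ..
  also have "\<dots> \<le> (\<Sum>u\<leftarrow>us. L2_set (G (outer u)) Iset)" by (rule L2_list)
  also have "\<dots> = (\<Sum>u\<leftarrow>us. sqrt 3 * nrm u)" unfolding L2_pure ..
  also have "\<dots> = sqrt 3" using n1 by (simp add: sum_list_const_mult)
  finally have L: "L2_set (G \<rho>) Iset \<le> sqrt 3" .
  have "(\<Sum>x\<in>Iset. (G \<rho> x)^2) = (L2_set (G \<rho>) Iset)^2"
    unfolding L2_set_def by (simp add: sum_nonneg)
  also have "\<dots> \<le> (sqrt 3)^2" using power_mono[OF L L2_set_nonneg, of 2] by simp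
  finally show ?thesis using total[of \<rho>] by simp
qed


definition vex :: "bool\<times>bool\<times>bool \<Rightarrow> complex" where
  "vex x = (if x = (False,True,True) then 1 else if x = (True,False,True) then 1
            else if x = (True,True,False) then 2 else 0)"

definition rex :: "(bool\<times>bool\<times>bool) op" where
  "rex = (\<lambda>i j. outer vex i j / 6)"

lemma rex_density: "density rex"
proof -
  have h: "hermitian rex" unfolding hermitian_def rex_def outer_def by (simp add: mult.commute)
  have "0 \<le> Re (Q rex w)" for w
  proof -
    have "Q rex w = Q (outer vex) w / 6" unfolding Q_def rex_def by (simp add: sum_divide_distrib)
    moreover have "Q (outer vex) w = complex_of_real ((cmod (\<Sum>i\<in>UNIV. cnj (w i) * vex i))^2)"
      unfolding Q_outer complex_norm_square ..
    ultimately have "Q rex w = complex_of_real ((cmod (\<Sum>i\<in>UNIV. cnj (w i) * vex i))^2) / 6" by metis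
    then have "Re (Q rex w) = (cmod (\<Sum>i\<in>UNIV. cnj (w i) * vex i))^2 / 6"
      by (simp only: Re_divide_numeral Re_complex_of_real)
    then show ?thesis by (metis divide_nonneg_pos zero_le_power2 zero_less_numeral)
  qed
  moreover have "trace rex = 1"
    unfolding trace_def rex_def outer_def vex_def by (simp add: UNIV_bool8)
  ultimately show ?thesis unfolding density_def psd_Q using h by blast
qed

lemma rex_S: "S (red_AC rex) = 4/3" "S (red_BC rex) = 4/3"
  unfolding S_def corr_def red_AC_def red_BC_def rex_def outer_def vex_def trace_def mprod_def tensor_def pauli_def
  by (simp_all add: UNIV_bool2 UNIV_bool power2_eq_square)

theorem theorem1:
  shows "(\<forall>\<rho> :: (bool \<times> bool \<times> bool) op. density \<rho> \<longrightarrow>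
            \<not> (S (red_AB \<rho>) > 1 \<and> S (red_AC \<rho>) > 1 \<and> S (red_BC \<rho>) > 1))
       \<and> (\<exists>\<rho> :: (bool \<times> bool \<times> bool) op. density \<rho> \<and>
            ((S (red_AB \<rho>) > 1 \<and> S (red_AC \<rho>) > 1) \<or>
             (S (red_AB \<rho>) > 1 \<and> S (red_BC \<rho>) > 1) \<or>
             (S (red_AC \<rho>) > 1 \<and> S (red_BC \<rho>) > 1)))"
proof
  show "\<forall>\<rho> :: (bool \<times> bool \<times> bool) op. density \<rho> \<longrightarrow>
            \<not> (S (red_AB \<rho>) > 1 \<and> S (red_AC \<rho>) > 1 \<and> S (red_BC \<rho>) > 1)"
    using main_bound by fastforce
  show "\<exists>\<rho> :: (bool \<times> bool \<times> bool) op. density \<rho> \<and>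
            ((S (red_AB \<rho>) > 1 \<and> S (red_AC \<rho>) > 1) \<or>
             (S (red_AB \<rho>) > 1 \<and> S (red_BC \<rho>) > 1) \<or>
             (S (red_AC \<rho>) > 1 \<and> S (red_BC \<rho>) > 1))"
    using rex_density rex_S by (intro exI[of _ rex]) simp
qed

end
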